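(* For every integer $n\ge5$ there exists a prismatic cube $\Pi_{4,3}^n$ in hyperbolic space $\mathbb{H}^3$.
   Context: Let $P_{4,3}^n$ be the regular (possibly ideal or hyperideal) hyperbolic cube centered at a point $O$ whose dihedral angle is $2\pi/n$, and let $\Gamma_{4,3}^n$ be the discrete group generated by the hyperbolic reflections in the planes of the faces of $P_{4,3}^n$ (it has $P_{4,3}^n$ as a fundamental domain). A prismatic cube $\Pi_{4,3}^n$ is obtained as follows: one chooses a smaller compact regular cube $Q$ centered at $O$, with the same symmetry axes as $P_{4,3}^n$ and lying inside it, such that for each face $F$ of $Q$, the face $F$ and its image $F'$ under reflection in the corresponding face of $P_{4,3}^n$ are the bottom and top of a prism whose four lateral faces are regular squares (all edges of equal length). $\Pi_{4,3}^n$ is the union of all images under $\Gamma_{4,3}^n$ of these lateral squares; it is an infinite polyhedral surface consisting of squares. Existence of $\Pi_{4,3}^n$ means existence of such a $Q$. *)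

theory Defs
  imports "HOL-Analysis.Analysis"
begin

text \<open>Hyperboloid model of hyperbolic 3-space inside Minkowski space R^{3,1}.
  Coordinate 1 is the time-like coordinate, coordinates 2,3,4 are space-like.\<close>

definition mink :: "real^4 \<Rightarrow> real^4 \<Rightarrow> real" where
  "mink x y = - x$1 * y$1 + x$2 * y$2 + x$3 * y$3 + x$4 * y$4"

definition hyp3 :: "(real^4) set" where
  "hyp3 = {x. mink x x = -1 \<and> x$1 > 0}"

definition hdist :: "real^4 \<Rightarrow> real^4 \<Rightarrow> real" where
  "hdist x y = arcosh (- mink x y)"

definition hO :: "real^4" where
  "hO = axis 1 1"

text \<open>A hyperbolic plane is described by a unit space-like normal e (mink e e = 1):
  it is the set of points x of hyp3 with mink x e = 0.
  The hyperbolic reflection in that plane:\<close>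
definition hrefl :: "real^4 \<Rightarrow> real^4 \<Rightarrow> real^4" where
  "hrefl e x = x - (2 * mink x e) *\<^sub>R e"

definition spacelike_unit :: "real^4 \<Rightarrow> bool" where
  "spacelike_unit e \<longleftrightarrow> mink e e = 1"

text \<open>Two planes with unit normals e1, e2 intersect in hyp3 iff abs (mink e1 e2) < 1;
  if e1, e2 are the outward normals of a convex polyhedron, the interior dihedral
  angle along the common line is arccos (- mink e1 e2).\<close>
definition planes_intersect :: "real^4 \<Rightarrow> real^4 \<Rightarrow> bool" where
  "planes_intersect e1 e2 \<longleftrightarrow> \<bar>mink e1 e2\<bar> < 1"

definition dihedral_angle :: "real^4 \<Rightarrow> real^4 \<Rightarrow> real" where
  "dihedral_angle e1 e2 = arccos (- mink e1 e2)"

text \<open>Regular cube centred at O whose symmetry axes are the coordinate axes 2,3,4: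
  its face planes are at hyperbolic distance a from O, perpendicular to the axis i,
  on the side s (s = 1 or s = -1).\<close>
definition face_normal :: "real \<Rightarrow> 4 \<Rightarrow> real \<Rightarrow> real^4" where
  "face_normal a i s = sinh a *\<^sub>R axis 1 1 + (s * cosh a) *\<^sub>R axis i 1"

definition face_index :: "(4 \<times> real) set" where
  "face_index = {2,3,4} \<times> {-1,1}"

text \<open>The (possibly ideal or hyperideal) cube P: intersection of the six half-spaces.\<close>
definition cube_P :: "real \<Rightarrow> (real^4) set" where
  "cube_P a = {x \<in> hyp3. \<forall>(i,s)\<in>face_index. mink x (face_normal a i s) \<le> 0}"

definition cube_dihedral :: "real \<Rightarrow> real \<Rightarrow> bool" where
  "cube_dihedral a theta \<longleftrightarrow>
     (\<forall>(i,s)\<in>face_index. \<forall>(j,t)\<in>face_index. i \<noteq> j \<longrightarrow>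
        planes_intersect (face_normal a i s) (face_normal a j t) \<and>
        dihedral_angle (face_normal a i s) (face_normal a j t) = theta)"

text \<open>Sign vectors labelling the 8 vertices of a cube (entries on coordinates 2,3,4).\<close>
definition signs :: "(4 \<Rightarrow> real) set" where
  "signs = {sg. \<forall>i\<in>{2,3,4}. sg i \<in> {-1,1}}"

text \<open>Vertex of the compact regular cube Q centred at O with the same symmetry axes,
  whose vertices are at hyperbolic distance r from O.\<close>
definition cube_vertex :: "real \<Rightarrow> (4 \<Rightarrow> real) \<Rightarrow> real^4" where
  "cube_vertex r sg = cosh r *\<^sub>R axis 1 1 +
     (sinh r / sqrt 3) *\<^sub>R (\<Sum>i\<in>{2,3,4}. sg i *\<^sub>R axis i 1)"

definition cube_adjacent :: "(4 \<Rightarrow> real) \<Rightarrow> (4 \<Rightarrow> real) \<Rightarrow> bool" where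
  "cube_adjacent sg tg \<longleftrightarrow> card {j\<in>{2,3,4}. sg j \<noteq> tg j} = 1"

text \<open>A regular square (in the sense of the paper: all edges of equal length) with
  consecutive vertices p, q, u, w: four distinct points of hyp3 lying in a common
  hyperbolic plane, all four edges of the same length.\<close>
definition regular_square :: "real^4 \<Rightarrow> real^4 \<Rightarrow> real^4 \<Rightarrow> real^4 \<Rightarrow> bool" where
  "regular_square p q u w \<longleftrightarrow>
     p \<in> hyp3 \<and> q \<in> hyp3 \<and> u \<in> hyp3 \<and> w \<in> hyp3 \<and>
     distinct [p, q, u, w] \<and>
     (\<exists>e. spacelike_unit e \<and> mink p e = 0 \<and> mink q e = 0 \<and> mink u e = 0 \<and> mink w e = 0) \<and>
     hdist p q = hdist q u \<and> hdist q u = hdist u w \<and> hdist u w = hdist w p"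

definition Q_inside_P :: "real \<Rightarrow> real \<Rightarrow> bool" where
  "Q_inside_P a r \<longleftrightarrow>
     (\<forall>sg\<in>signs. \<forall>(i,s)\<in>face_index. mink (cube_vertex r sg) (face_normal a i s) < 0)"

text \<open>Prism condition: for each face F of Q (the face lying towards face (i,s) of P,
  i.e. vertices with sg i = s) and its image F' under the reflection in the plane of
  face (i,s) of P, each lateral quadrilateral  v1, v2, refl v2, refl v1  (for an edge
  v1 v2 of F) is a regular square.\<close>
definition prism_condition :: "real \<Rightarrow> real \<Rightarrow> bool" where
  "prism_condition a r \<longleftrightarrow>
     (\<forall>(i,s)\<in>face_index. \<forall>sg\<in>signs. \<forall>tg\<in>signs.
        sg i = s \<longrightarrow> tg i = s \<longrightarrow> cube_adjacent sg tg \<longrightarrow>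
        regular_square (cube_vertex r sg) (cube_vertex r tg)
          (hrefl (face_normal a i s) (cube_vertex r tg))
          (hrefl (face_normal a i s) (cube_vertex r sg)))"

end

theory Submission imports Defs begin

lemma neq4: "(2::4) \<noteq> 3" "(2::4) \<noteq> 4" "(3::4) \<noteq> 4" "(1::4) \<noteq> 2" "(1::4) \<noteq> 3" "(1::4)\<noteq>4"
  by simp_all

lemma axis_comp: "axis i (c::real) $ j = (if j = i then c else 0)"
  by (simp add: axis_def)

lemma mink_sym: "mink x y = mink y x" unfolding mink_def by simp
lemma mink_add_left: "mink (x + y) z = mink x z + mink y z" unfolding mink_def by (simp add: algebra_simps)
lemma mink_add_right: "mink z (x + y) = mink z x + mink z y" unfolding mink_def by (simp add: algebra_simps)
lemma mink_diff_left: "mink (x - y) z = mink x z - mink y z" unfolding mink_def by (simp add: algebra_simps)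
lemma mink_diff_right: "mink z (x - y) = mink z x - mink z y" unfolding mink_def by (simp add: algebra_simps)
lemma mink_scale_left: "mink (c *\<^sub>R x) z = c * mink x z" unfolding mink_def by (simp add: algebra_simps)
lemma mink_scale_right: "mink z (c *\<^sub>R x) = c * mink z x" unfolding mink_def by (simp add: algebra_simps)
lemma mink_axis: "mink (axis i 1) (axis j 1) = (if i = j then (if i = 1 then -1 else 1) else 0)"
  unfolding mink_def axis_comp
  using exhaust_4[of i] exhaust_4[of j] by (elim disjE; simp)

lemmas mink_simps = mink_add_left mink_add_right mink_diff_left mink_diff_right
  mink_scale_left mink_scale_right mink_axis

lemma others:
  assumes "i \<in> {2,3,4::4}"
  shows "\<exists>j k. j \<in> {2,3,4} \<and> k \<in> {2,3,4} \<and> i \<noteq> j \<and> i \<noteq> k \<and> j \<noteq> k \<and> {2,3,4::4} = {i,j,k}"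
proof -
  have "i = 2 \<or> i = 3 \<or> i = 4" using assms by auto
  then show ?thesis
  proof (elim disjE)
    assume "i = 2" then show ?thesis by (intro exI[of _ 3] exI[of _ 4]) (simp add: neq4)
  next
    assume "i = 3" then show ?thesis by (intro exI[of _ 2] exI[of _ 4]) (auto simp add: neq4)
  next
    assume "i = 4" then show ?thesis by (intro exI[of _ 2] exI[of _ 3]) (auto simp add: neq4)
  qed
qed

lemma third:
  assumes "i \<in> {2,3,4::4}" "j \<in> {2,3,4::4}" "i \<noteq> j"
  shows "\<exists>k. k \<in> {2,3,4} \<and> i \<noteq> k \<and> j \<noteq> k \<and> {2,3,4::4} = {i,j,k}"
proof -
  obtain j' k where h: "j' \<in> {2,3,4}" "k \<in> {2,3,4}" "i \<noteq> j'" "i \<noteq> k" "j' \<noteq> k" "{2,3,4::4} = {i,j',k}"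
    using others[OF assms(1)] by blast
  have "j = j' \<or> j = k" using assms h by auto
  then show ?thesis
  proof
    assume "j = j'" then show ?thesis using h by blast
  next
    assume "j = k" then show ?thesis using h by (intro exI[of _ j']) auto
  qed
qed

lemma not1: "i \<in> {2,3,4::4} \<Longrightarrow> i \<noteq> 1" using neq4 by auto

lemma vertex_decomp:
  assumes "{2,3,4::4} = {i,j,k}" "i \<noteq> j" "i \<noteq> k" "j \<noteq> k"
  shows "cube_vertex r sg = cosh r *\<^sub>R axis 1 1 +
     (sinh r / sqrt 3) *\<^sub>R (sg i *\<^sub>R axis i 1 + sg j *\<^sub>R axis j 1 + sg k *\<^sub>R axis k 1)"
  unfolding cube_vertex_def assms(1) using assms(2-4) by (simp add: algebra_simps)

lemma sgn: "sg \<in> signs \<Longrightarrow> l \<in> {2,3,4} \<Longrightarrow> sg l = -1 \<or> sg l = 1"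
  unfolding signs_def mem_Collect_eq by (drule bspec) auto

lemma square:
  assumes B: "sinh a > 0" and r: "r > 0"
    and rel: "(sinh r / sqrt 3) * (1 + cosh a) = cosh r * sinh a"
    and fi: "(i,s) \<in> face_index" and sgs: "sg \<in> signs" and tgs: "tg \<in> signs"
    and si: "sg i = s" and ti: "tg i = s" and adj: "cube_adjacent sg tg"
  shows "regular_square (cube_vertex r sg) (cube_vertex r tg)
          (hrefl (face_normal a i s) (cube_vertex r tg))
          (hrefl (face_normal a i s) (cube_vertex r sg))"
proof -
  have i234: "i \<in> {2,3,4}" and s1: "s = -1 \<or> s = 1" using fi by (auto simp: face_index_def)
  have c1: "card {l\<in>{2,3,4}. sg l \<noteq> tg l} = 1" using adj unfolding cube_adjacent_def .
  obtain j where J: "{l\<in>{2,3,4}. sg l \<noteq> tg l} = {j}"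
    using card_1_singletonE[OF c1] by blast
  have "j \<in> {l\<in>{2,3,4}. sg l \<noteq> tg l}" unfolding J by simp
  then have j234: "j \<in> {2,3,4}" and sgj: "sg j \<noteq> tg j" by simp_all
  have ij: "i \<noteq> j" using sgj si ti by auto
  obtain k where k234: "k \<in> {2,3,4}" and ik: "i \<noteq> k" and jk: "j \<noteq> k"
     and set3: "{2,3,4::4} = {i,j,k}"
    using third[OF i234 j234 ij] by blast
  have sgk: "sg k = tg k"
  proof (rule ccontr)
    assume "sg k \<noteq> tg k"
    then have "k \<in> {l\<in>{2,3,4}. sg l \<noteq> tg l}" using k234 by blast
    then have "k \<in> {j}" unfolding J .
    then show False using jk by simp
  qed
  have sj1: "sg j = -1 \<or> sg j = 1" and tj1: "tg j = -1 \<or> tg j = 1"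
    and sk1: "sg k = -1 \<or> sg k = 1"
    using sgn[OF sgs j234] sgn[OF tgs j234] sgn[OF sgs k234] by auto
  have tgj: "tg j = - sg j" using sj1 tj1 sgj by auto
  define A where "A = cosh a"
  define Bv where "Bv = sinh a"
  define C where "C = cosh r"
  define t where "t = sinh r / sqrt 3"
  define \<sigma> where "\<sigma> = sg j"
  define \<kappa> where "\<kappa> = sg k"
  have ss: "s * s = 1" using s1 by auto
  have \<sigma>\<sigma>: "\<sigma> * \<sigma> = 1" using sj1 unfolding \<sigma>_def by auto
  have \<kappa>\<kappa>: "\<kappa> * \<kappa> = 1" using sk1 unfolding \<kappa>_def by auto
  have AA: "A * A = 1 + Bv * Bv" unfolding A_def Bv_def using cosh_square_eq[of a] by (simp add: power2_eq_square)
  have tt: "t * t * 3 = sinh r * sinh r" unfolding t_def by (simp add: power2_eq_square[symmetric] power_divide)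
  have CC: "C * C = 1 + 3 * t * t" using tt cosh_square_eq[of r] unfolding C_def by (simp add: power2_eq_square)
  have rel': "t * (1 + A) = C * Bv" using rel unfolding t_def A_def C_def Bv_def .
  have tpos: "t > 0" unfolding t_def using r by simp
  have Bpos: "Bv > 0" using B unfolding Bv_def .
  have Apos: "A > 0" unfolding A_def by simp
  have Cpos: "C > 0" unfolding C_def by simp
  have n1: "i \<noteq> 1" "j \<noteq> 1" "k \<noteq> 1" using not1 i234 j234 k234 by auto
  have neqs: "i \<noteq> j" "j \<noteq> i" "i \<noteq> k" "k \<noteq> i" "j \<noteq> k" "k \<noteq> j" "1 \<noteq> i" "1 \<noteq> j" "1 \<noteq> k"
    using ij ik jk n1 by auto
  define p :: "real^4" where "p = C *\<^sub>R axis 1 1 + t *\<^sub>R (s *\<^sub>R axis i 1 + \<sigma> *\<^sub>R axis j 1 + \<kappa> *\<^sub>R axis k 1)"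
  define q :: "real^4" where "q = C *\<^sub>R axis 1 1 + t *\<^sub>R (s *\<^sub>R axis i 1 + (-\<sigma>) *\<^sub>R axis j 1 + \<kappa> *\<^sub>R axis k 1)"
  define e :: "real^4" where "e = Bv *\<^sub>R axis 1 1 + (s * A) *\<^sub>R axis i 1"
  have pv: "cube_vertex r sg = p" unfolding p_def
    using vertex_decomp[OF set3 ij ik jk, of r sg] si by (simp add: C_def t_def \<sigma>_def \<kappa>_def)
  have qv: "cube_vertex r tg = q" unfolding q_def
    using vertex_decomp[OF set3 ij ik jk, of r tg] ti tgj sgk by (simp add: C_def t_def \<sigma>_def \<kappa>_def)
  have ev: "face_normal a i s = e" unfolding e_def face_normal_def A_def Bv_def by simp
  have ee: "mink e e = 1" unfolding e_def
    apply (simp add: mink_simps neqs n1)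
    using ss AA by algebra
  have pe: "mink p e = - t" unfolding e_def p_def
    apply (simp add: mink_simps neqs n1)
    using ss AA rel' by algebra
  have qe: "mink q e = - t" unfolding e_def q_def
    apply (simp add: mink_simps neqs n1)
    using ss AA rel' by algebra
  have pp: "mink p p = -1" unfolding p_def
    apply (simp add: mink_simps neqs n1)
    using ss \<sigma>\<sigma> \<kappa>\<kappa> CC by algebra
  have qq: "mink q q = -1" unfolding q_def
    apply (simp add: mink_simps neqs n1)
    using ss \<sigma>\<sigma> \<kappa>\<kappa> CC by algebra
  have pq: "mink p q = - C * C + t * t" unfolding p_def q_def
    apply (simp add: mink_simps neqs n1)
    using ss \<sigma>\<sigma> \<kappa>\<kappa> CC by algebra
  have Rp: "hrefl e p = p + (2 * t) *\<^sub>R e" unfolding hrefl_def pe by simp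
  have Rq: "hrefl e q = q + (2 * t) *\<^sub>R e" unfolding hrefl_def qe by simp
  have ep: "mink e p = - t" using pe mink_sym by metis
  have eq: "mink e q = - t" using qe mink_sym by metis
  have qp: "mink q p = - C * C + t * t" using pq mink_sym by metis
  have RpRp: "mink (hrefl e p) (hrefl e p) = -1" unfolding Rp
    by (simp add: mink_simps pp pe ep ee algebra_simps)
  have RqRq: "mink (hrefl e q) (hrefl e q) = -1" unfolding Rq
    by (simp add: mink_simps qq qe eq ee algebra_simps)
  have RqRp: "mink (hrefl e q) (hrefl e p) = - C * C + t * t" unfolding Rq Rp
    by (simp add: mink_simps qp pe ep qe eq ee algebra_simps)
  have qRq: "mink q (hrefl e q) = - C * C + t * t" unfolding Rq
    using CC by (simp add: mink_simps qq qe algebra_simps)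
  have Rpp: "mink (hrefl e p) p = - C * C + t * t" unfolding Rp
    using CC by (simp add: mink_simps pp ep algebra_simps)
  have p1: "p $ 1 = C" and q1: "q $ 1 = C" unfolding p_def q_def using neqs by (simp_all add: axis_comp)
  have pj: "p $ j = t * \<sigma>" and qj: "q $ j = - (t * \<sigma>)" unfolding p_def q_def using neqs by (simp_all add: axis_comp)
  have e1: "e $ 1 = Bv" and ej: "e $ j = 0" unfolding e_def using neqs by (simp_all add: axis_comp)
  have Rp1: "hrefl e p $ 1 = C + 2 * t * Bv" and Rq1: "hrefl e q $ 1 = C + 2 * t * Bv"
    unfolding Rp Rq by (simp_all add: p1 q1 e1)
  have Rpj: "hrefl e p $ j = t * \<sigma>" and Rqj: "hrefl e q $ j = - (t * \<sigma>)"
    unfolding Rp Rq by (simp_all add: pj qj ej)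
  have tBpos: "2 * t * Bv > 0" using tpos Bpos by simp
  have pos2: "C + 2 * t * Bv > 0" using tBpos Cpos by linarith
  have \<sigma>nz: "t * \<sigma> \<noteq> 0" using tpos \<sigma>\<sigma> by auto
  have dist: "distinct [p, q, hrefl e q, hrefl e p]"
  proof -
    have "p \<noteq> q" using pj qj \<sigma>nz by force
    moreover have "p \<noteq> hrefl e q" "p \<noteq> hrefl e p" "q \<noteq> hrefl e q" "q \<noteq> hrefl e p"
      using p1 q1 Rp1 Rq1 tBpos by force+
    moreover have "hrefl e q \<noteq> hrefl e p" using Rpj Rqj \<sigma>nz by force
    ultimately show ?thesis by auto
  qed
  define N where "N = (1 + A) * (1 + A) - Bv * Bv"
  have "N = 2 + 2 * A" unfolding N_def using AA by algebra
  then have Npos: "N > 0" using Apos by simp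
  define f' :: "real^4" where "f' = (Bv * A) *\<^sub>R axis 1 1 + (s * Bv * Bv) *\<^sub>R axis i 1 + ((1 + A) * \<kappa>) *\<^sub>R axis k 1"
  have ff: "mink f' f' = N" unfolding f'_def N_def
    apply (simp add: mink_simps neqs n1)
    using ss \<kappa>\<kappa> AA by algebra
  have fp: "mink p f' = 0" unfolding f'_def p_def
    apply (simp add: mink_simps neqs n1)
    using ss \<kappa>\<kappa> AA rel' by algebra
  have fq: "mink q f' = 0" unfolding f'_def q_def
    apply (simp add: mink_simps neqs n1)
    using ss \<kappa>\<kappa> AA rel' by algebra
  have fe: "mink e f' = 0" unfolding f'_def e_def
    apply (simp add: mink_simps neqs n1)
    using ss \<kappa>\<kappa> AA rel' by algebra
  define f where "f = (1 / sqrt N) *\<^sub>R f'"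
  have fu: "spacelike_unit f" unfolding spacelike_unit_def f_def
    using Npos by (simp add: mink_simps ff)
  have plane: "mink p f = 0 \<and> mink q f = 0 \<and> mink (hrefl e q) f = 0 \<and> mink (hrefl e p) f = 0"
    unfolding f_def Rp Rq by (simp add: mink_simps fp fq fe)
  have hyp: "p \<in> hyp3" "q \<in> hyp3" "hrefl e q \<in> hyp3" "hrefl e p \<in> hyp3"
    using Cpos tBpos by (simp_all add: hyp3_def pos2 pp qq RpRp RqRq p1 q1 Rp1 Rq1)
  have d: "hdist p q = hdist q (hrefl e q)" "hdist q (hrefl e q) = hdist (hrefl e q) (hrefl e p)"
    "hdist (hrefl e q) (hrefl e p) = hdist (hrefl e p) p"
    unfolding hdist_def using pq qRq RqRp Rpp by simp_all
  show ?thesis unfolding pv qv ev regular_square_def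
    using hyp dist fu plane d by blast
qed


lemma inside:
  assumes B: "sinh a > 0" and r: "r > 0"
    and rel: "(sinh r / sqrt 3) * (1 + cosh a) = cosh r * sinh a"
    and fi: "(i,s) \<in> face_index" and sgs: "sg \<in> signs"
  shows "mink (cube_vertex r sg) (face_normal a i s) < 0"
proof -
  have i234: "i \<in> {2,3,4}" and s1: "s = -1 \<or> s = 1" using fi by (auto simp: face_index_def)
  obtain j k where h: "j \<in> {2,3,4}" "k \<in> {2,3,4}" "i \<noteq> j" "i \<noteq> k" "j \<noteq> k" "{2,3,4::4} = {i,j,k}"
    using others[OF i234] by blast
  have n1: "i \<noteq> 1" "j \<noteq> 1" "k \<noteq> 1" using not1 i234 h by auto
  have neqs: "i \<noteq> j" "j \<noteq> i" "i \<noteq> k" "k \<noteq> i" "j \<noteq> k" "k \<noteq> j" "1 \<noteq> i" "1 \<noteq> j" "1 \<noteq> k"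
    using h n1 by auto
  define t where "t = sinh r / sqrt 3"
  have tpos: "t > 0" unfolding t_def using r by simp
  have rel': "t * (1 + cosh a) = cosh r * sinh a" using rel unfolding t_def .
  have m: "mink (cube_vertex r sg) (face_normal a i s) = - cosh r * sinh a + s * sg i * cosh a * t"
    unfolding vertex_decomp[OF h(6) h(3) h(4) h(5)] face_normal_def t_def
    by (simp add: mink_simps neqs n1 algebra_simps)
  have "s * sg i = 1 \<or> s * sg i = -1" using s1 sgn[OF sgs i234] by auto
  then show ?thesis
  proof
    assume "s * sg i = 1"
    then have "mink (cube_vertex r sg) (face_normal a i s) = - t" unfolding m using rel' by (simp add: algebra_simps)
    then show ?thesis using tpos by simp
  next
    assume "s * sg i = -1"
    then have "mink (cube_vertex r sg) (face_normal a i s) = - cosh r * sinh a - cosh a * t" unfolding m by (simp add: algebra_simps)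
    moreover have "cosh r * sinh a > 0" "cosh a * t > 0" using B tpos by simp_all
    ultimately show ?thesis by simp
  qed
qed

lemma fn_mink:
  assumes "i \<noteq> j" "i \<noteq> 1" "j \<noteq> 1"
  shows "mink (face_normal a i s) (face_normal a j t) = - (sinh a * sinh a)"
  using assms unfolding face_normal_def by (simp add: mink_simps)

theorem mainTheorem3:
  fixes n :: nat
  assumes "n \<ge> 5"
  shows "\<exists>a>0. cube_dihedral a (2 * pi / real n) \<and>
           (\<exists>r>0. Q_inside_P a r \<and> prism_condition a r)"
proof -
  define \<theta> where "\<theta> = 2 * pi / real n"
  have npos: "real n \<ge> 5" using assms by simp
  have th0: "\<theta> > 0" unfolding \<theta>_def using npos by simp
  have "\<theta> \<le> 2 * pi / 5" unfolding \<theta>_def using divide_left_mono[of 5 "real n" "2*pi"] npos by simp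
  then have th1: "\<theta> < pi / 2" using pi_gt_zero by linarith
  have cpos: "cos \<theta> > 0" using th0 th1 by (simp add: cos_gt_zero)
  have clt: "cos \<theta> < 1" using cos_monotone_0_pi[of 0 \<theta>] th0 th1 by simp
  define B0 where "B0 = sqrt (cos \<theta>)"
  have B0pos: "B0 > 0" and B0lt: "B0 < 1" and B0sq: "B0 * B0 = cos \<theta>"
    unfolding B0_def using cpos clt by (simp_all add: real_sqrt_lt_1_iff)
  define a where "a = arsinh B0"
  have sa: "sinh a = B0" unfolding a_def by simp
  have apos: "a > 0" using B0pos sa sinh_real_pos_iff by metis
  define A where "A = cosh a"
  have A1: "A \<ge> 1" unfolding A_def by (rule cosh_real_ge_1)
  have s3: "sqrt 3 < 2" by (rule real_less_lsqrt) simp_all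
  define T where "T = sqrt 3 * B0 / (1 + A)"
  have Tpos: "T > 0" unfolding T_def using B0pos A1 by simp
  have "sqrt 3 * B0 < 2" using s3 B0lt B0pos
    by (metis mult.right_neutral mult_strict_left_mono order.strict_trans real_sqrt_gt_zero zero_less_numeral)
  then have Tlt: "T < 1" unfolding T_def using A1 by (simp add: divide_less_eq)
  define x where "x = sqrt ((1 + T) / (1 - T))"
  have xpos: "x > 0" unfolding x_def using Tpos Tlt by simp
  have xsq: "x ^ 2 = (1 + T) / (1 - T)" unfolding x_def using Tpos Tlt by simp
  define r where "r = ln x"
  have tr: "tanh r = T" unfolding r_def tanh_ln_real[OF xpos] xsq using Tlt
    by (simp add: field_simps)
  have rpos: "r > 0" using tr Tpos tanh_real_pos_iff by metis
  have srT: "sinh r = T * cosh r" using tr unfolding tanh_def by (simp add: field_simps)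
  have rel: "(sinh r / sqrt 3) * (1 + cosh a) = cosh r * sinh a"
  proof -
    have d1: "1 + cosh a \<noteq> 0" and d2: "sqrt 3 \<noteq> 0" using A1 unfolding A_def by simp_all
    have TA: "T * (1 + cosh a) = sqrt 3 * B0" unfolding T_def A_def using d1 by simp
    have "sinh r / sqrt 3 * (1 + cosh a) = (T * (1 + cosh a)) * cosh r / sqrt 3"
      unfolding srT by (simp add: algebra_simps)
    also have "\<dots> = B0 * cosh r" unfolding TA using d2 by simp
    finally show ?thesis unfolding sa by simp
  qed
  have Bpos: "sinh a > 0" using sa B0pos by simp
  have dih: "cube_dihedral a \<theta>"
    unfolding cube_dihedral_def
  proof (intro ballI, clarify)
    fix i s j t assume fi: "(i, s) \<in> face_index" and fj: "(j, t) \<in> face_index" and ij: "i \<noteq> j"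
    have "i \<noteq> 1" "j \<noteq> 1" using fi fj not1 by (auto simp: face_index_def)
    then have m: "mink (face_normal a i s) (face_normal a j t) = - cos \<theta>"
      using fn_mink[OF ij] sa B0sq by simp
    show "planes_intersect (face_normal a i s) (face_normal a j t) \<and>
        dihedral_angle (face_normal a i s) (face_normal a j t) = \<theta>"
      unfolding planes_intersect_def dihedral_angle_def m using cpos clt th0 th1
      by (simp add: arccos_cos)
  qed
  have qi: "Q_inside_P a r"
    unfolding Q_inside_P_def using inside[OF Bpos rpos rel] by blast
  have pc: "prism_condition a r"
    unfolding prism_condition_def using square[OF Bpos rpos rel] by blast
  show ?thesis unfolding \<theta>_def[symmetric] using apos dih rpos qi pc by blast
qed

end
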